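(* Let $F$ be a dill map with diameter $\delta$ and local rule $f$. (1) If $M,M'\in\mathbb N$ are such that for every $u\in A^*$ and every $j\in\{0,\dots,|u|-1\}$, $d_L(f^*(D_j(u)),f^*(u))\le M+\frac{|f^*(u)|-|f^*(D_j(u))|}{2}$ and $d_L(f^*(D_j(u)),f^*(u))\le M'-\frac{|f^*(u)|-|f^*(D_j(u))|}{2}$, then $F$ is $\frac{M+M'}{\lfloor f\rfloor}$-Lipschitz with respect to $\mathfrak d_L$. (2) If $L>0$ and $x\in A^{\mathbb N}$ satisfies $|f(x_{[i,i+\delta)})|\ge L$ for every $i\in\mathbb N$, then for every $y\in A^{\mathbb N}$, $\mathfrak d_L(F(x),F(y))\le(2\delta-1)\frac{\lceil f\rceil}{L}\mathfrak d_L(x,y)$. In particular, if $\tau$ is a substitution and $x$ satisfies $|\tau(x_i)|\ge L$ for all $i$, then $\mathfrak d_L(\overline\tau(x),\overline\tau(y))\le\frac{\lceil\tau\rceil}{L}\mathfrak d_L(x,y)$ for every $y$. (3) $F$ is $(2\delta-1)\frac{\lceil f\rceil}{\lfloor f\rfloor}$-Lipschitz with respect to $\mathfrak d_L$; in particular every substitution $\tau$ yields a $\frac{\lceil\tau\rceil}{\lfloor\tau\rfloor}$-Lipschitz map $\overline\tau$ with respect to $\mathfrak d_L$.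
   Context: $A$ is a finite alphabet; $u_{[i,j)}=u_i\cdots u_{j-1}$. A dill map with diameter $\delta\ge1$ has local rule $f:A^\delta\to A^+$ and is $F(x)=f(x_{[0,\delta)})f(x_{[1,\delta+1)})\cdots$; $\lfloor f\rfloor=\min_{u\in A^\delta}|f(u)|$, $\lceil f\rceil=\max_{u\in A^\delta}|f(u)|$. $f^*(u)=f(u_{[0,\delta)})\cdots f(u_{[|u|-\delta,|u|)})$ if $|u|\ge\delta$, empty otherwise. $D_j(u)$ is $u$ with the letter at position $j$ deleted. A substitution is a nonerasing morphism $\tau:A^*\to A^*$ (a dill map with $\delta=1$), $\overline\tau(z)=\tau(z_0)\tau(z_1)\cdots$, $\lfloor\tau\rfloor=\min_a|\tau(a)|$, $\lceil\tau\rceil=\max_a|\tau(a)|$. The Levenshtein distance is $d_L(u,v)=\frac{|u|+|v|}{2}-\ell$, $\ell$ the length of a longest common subsequence. The Feldman pseudo-metric is $\mathfrak d_L(x,y)=\limsup_{l\to\infty}d_L(x_{[0,l)},y_{[0,l)})/l$. A map $G$ is $C$-Lipschitz w.r.t. $\mathfrak d_L$ if $\mathfrak d_L(G(x),G(y))\le C\,\mathfrak d_L(x,y)$ for all $x,y$. *)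

theory Defs
  imports "HOL-Analysis.Analysis" "HOL-Library.Sublist" "HOL-Library.Extended_Real"
begin

definition pre :: "(nat \<Rightarrow> 'a) \<Rightarrow> nat \<Rightarrow> 'a list" where
  "pre x l = map x [0..<l]"

definition window :: "nat \<Rightarrow> (nat \<Rightarrow> 'a) \<Rightarrow> nat \<Rightarrow> 'a list" where
  "window \<delta> x i = map x [i..<i+\<delta>]"

definition fstar :: "('a list \<Rightarrow> 'a list) \<Rightarrow> nat \<Rightarrow> 'a list \<Rightarrow> 'a list" where
  "fstar f \<delta> u = (if \<delta> \<le> length u
     then concat (map (\<lambda>i. f (take \<delta> (drop i u))) [0..<length u - \<delta> + 1]) else [])"

text \<open>Dill map F(x) = f(x[0,\<delta>)) f(x[1,\<delta>+1)) ...; its k-th letter is the k-th letter of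
  f*(x[0,k+\<delta>)), which has length at least k+1 (outputs are nonempty).\<close>
definition dill :: "('a list \<Rightarrow> 'a list) \<Rightarrow> nat \<Rightarrow> (nat \<Rightarrow> 'a) \<Rightarrow> nat \<Rightarrow> 'a" where
  "dill f \<delta> x k = fstar f \<delta> (pre x (k + \<delta>)) ! k"

definition subst_inf :: "('a \<Rightarrow> 'a list) \<Rightarrow> (nat \<Rightarrow> 'a) \<Rightarrow> nat \<Rightarrow> 'a" where
  "subst_inf \<tau> z k = concat (map (\<lambda>i. \<tau> (z i)) [0..<k+1]) ! k"

definition rule_min :: "('a list \<Rightarrow> 'a list) \<Rightarrow> nat \<Rightarrow> nat" where
  "rule_min f \<delta> = Min {length (f u) | u. length u = \<delta>}"

definition rule_max :: "('a list \<Rightarrow> 'a list) \<Rightarrow> nat \<Rightarrow> nat" where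
  "rule_max f \<delta> = Max {length (f u) | u. length u = \<delta>}"

definition subst_min :: "('a \<Rightarrow> 'a list) \<Rightarrow> nat" where
  "subst_min \<tau> = Min (range (\<lambda>a. length (\<tau> a)))"

definition subst_max :: "('a \<Rightarrow> 'a list) \<Rightarrow> nat" where
  "subst_max \<tau> = Max (range (\<lambda>a. length (\<tau> a)))"

definition del_at :: "nat \<Rightarrow> 'a list \<Rightarrow> 'a list" where
  "del_at j u = take j u @ drop (Suc j) u"

definition lcs_len :: "'a list \<Rightarrow> 'a list \<Rightarrow> nat" where
  "lcs_len u v = Max {length w | w. subseq w u \<and> subseq w v}"

definition lev :: "'a list \<Rightarrow> 'a list \<Rightarrow> real" where
  "lev u v = (real (length u) + real (length v)) / 2 - real (lcs_len u v)"

definition feldman :: "(nat \<Rightarrow> 'a) \<Rightarrow> (nat \<Rightarrow> 'a) \<Rightarrow> ereal" where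
  "feldman x y = limsup (\<lambda>l. ereal (lev (pre x l) (pre y l) / real l))"

definition lipschitz_feldman :: "real \<Rightarrow> ((nat \<Rightarrow> 'a) \<Rightarrow> (nat \<Rightarrow> 'a)) \<Rightarrow> bool" where
  "lipschitz_feldman C G \<longleftrightarrow> (\<forall>x y. feldman (G x) (G y) \<le> ereal C * feldman x y)"

end

theory Submission
  imports Defs
begin


lemma lcs_fin: "finite {length w | w. subseq w u \<and> subseq w v}"
proof -
  have "{length w | w. subseq w u \<and> subseq w v} \<subseteq> {..length u}"
    using list_emb_length by fastforce
  then show ?thesis using finite_subset by blast
qed

lemma lcs_ge: "subseq w u \<Longrightarrow> subseq w v \<Longrightarrow> length w \<le> lcs_len u v"
  unfolding lcs_len_def using lcs_fin by (intro Max_ge) auto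

lemma lcs_ex: "\<exists>w. subseq w u \<and> subseq w v \<and> length w = lcs_len u v"
proof -
  have "lcs_len u v \<in> {length w | w. subseq w u \<and> subseq w v}"
    unfolding lcs_len_def using lcs_fin by (intro Max_in) auto
  then show ?thesis by auto
qed

lemma lcs_le1: "lcs_len u v \<le> length u"
  using lcs_ex[of u v] list_emb_length by fastforce

lemma lcs_le2: "lcs_len u v \<le> length v"
  using lcs_ex[of u v] list_emb_length by fastforce

lemma lcs_sym: "lcs_len u v = lcs_len v u"
  unfolding lcs_len_def by (rule arg_cong[where f=Max]) blast

lemma lcs_mono: "subseq u u' \<Longrightarrow> subseq v v' \<Longrightarrow> lcs_len u v \<le> lcs_len u' v'"
proof -
  assume a: "subseq u u'" "subseq v v'"
  obtain w where w: "subseq w u" "subseq w v" "length w = lcs_len u v" using lcs_ex by blast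
  have "subseq w u'" "subseq w v'" using w a subseq_order.order_trans by blast+
  then show ?thesis using lcs_ge w(3) by metis
qed

lemma nths_subset_subseq: "P \<subseteq> Q \<Longrightarrow> subseq (nths xs P) (nths xs Q)"
proof (induction xs arbitrary: P Q)
  case Nil then show ?case by simp
next
  case (Cons x xs)
  have "{j. Suc j \<in> P} \<subseteq> {j. Suc j \<in> Q}" using Cons.prems by auto
  then have "subseq (nths xs {j. Suc j \<in> P}) (nths xs {j. Suc j \<in> Q})" using Cons.IH by blast
  then show ?case using Cons.prems by (auto simp: nths_Cons)
qed

lemma lcs_tri: "lcs_len A B + lcs_len B C \<le> lcs_len A C + length B"
proof -
  obtain w1 where w1: "subseq w1 A" "subseq w1 B" "length w1 = lcs_len A B" using lcs_ex by blast
  obtain w2 where w2: "subseq w2 B" "subseq w2 C" "length w2 = lcs_len B C" using lcs_ex by blast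
  obtain P where P: "w1 = nths B P" using w1(2) subseq_conv_nths by blast
  obtain Q where Q: "w2 = nths B Q" using w2(1) subseq_conv_nths by blast
  define w where "w = nths B (P \<inter> Q)"
  have "subseq w w1" unfolding w_def P by (rule nths_subset_subseq) auto
  then have a: "subseq w A" using w1(1) subseq_order.order_trans by blast
  have "subseq w w2" unfolding w_def Q by (rule nths_subset_subseq) auto
  then have c: "subseq w C" using w2(2) subseq_order.order_trans by blast
  let ?P = "{i. i < length B \<and> i \<in> P}" and ?Q = "{i. i < length B \<and> i \<in> Q}"
  have l1: "length w1 = card ?P" using P length_nths by metis
  have l2: "length w2 = card ?Q" using Q length_nths by metis
  have lw: "length w = card (?P \<inter> ?Q)" unfolding w_def length_nths
    by (rule arg_cong[where f=card]) blast
  have fin: "finite ?P" "finite ?Q" by auto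
  have "?P \<union> ?Q \<subseteq> {..<length B}" by auto
  then have "card (?P \<union> ?Q) \<le> length B"
    using card_mono[OF finite_lessThan] card_lessThan by metis
  moreover have "card (?P \<union> ?Q) + card (?P \<inter> ?Q) = card ?P + card ?Q"
    using card_Un_Int[OF fin] by simp
  moreover have "length w \<le> lcs_len A C" using lcs_ge[OF a c] .
  ultimately show ?thesis using w1(3) w2(3) l1 l2 lw by linarith
qed

lemma lcs_take: "lcs_len A B \<le> lcs_len A (take n B) + (length B - n)"
proof -
  obtain w where w: "subseq w A" "subseq w B" "length w = lcs_len A B" using lcs_ex by blast
  have "subseq w (take n B @ drop n B)" using w(2) by simp
  then obtain w1 w2 where ws: "w = w1 @ w2" "subseq w1 (take n B)" "subseq w2 (drop n B)"
    by (rule subseq_appendE)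
  have "subseq w1 w" unfolding ws(1) by (rule subseq_rev_drop_many) simp
  then have "subseq w1 A" using w(1) subseq_order.order_trans by blast
  then have "length w1 \<le> lcs_len A (take n B)" using lcs_ge ws(2) by blast
  moreover have "length w2 \<le> length B - n" using ws(3) list_emb_length by fastforce
  ultimately show ?thesis using ws(1) w(3) by simp
qed

lemma lcs_common: "length P + length S \<le> lcs_len (P @ Y @ S) (P @ X @ S)"
proof -
  have "subseq (P @ S) (P @ Y @ S)" "subseq (P @ S) (P @ X @ S)"
    by (simp_all add: subseq_append' subseq_drop_many)
  then show ?thesis using lcs_ge by fastforce
qed


lemma length_del_at: "j < length u \<Longrightarrow> length (del_at j u) = length u - 1"
  by (simp add: del_at_def)


lemma del_at_Cons0: "del_at 0 (y # ys) = ys" by (simp add: del_at_def)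

lemma del_at_Suc: "del_at (Suc j) (y # ys) = y # del_at j ys" by (simp add: del_at_def)


lemma del_exists: "subseq w u \<Longrightarrow> length w < length u \<Longrightarrow> \<exists>j<length u. subseq w (del_at j u)"
proof (induction rule: list_emb.induct)
  case (list_emb_Nil ys)
  then show ?case by (intro exI[of _ 0]) auto
next
  case (list_emb_Cons xs ys y)
  then show ?case by (intro exI[of _ 0]) (auto simp: del_at_Cons0)
next
  case (list_emb_Cons2 x y xs ys)
  then obtain j where "j < length ys" "subseq xs (del_at j ys)" by auto
  then show ?case using list_emb_Cons2 by (intro exI[of _ "Suc j"]) (auto simp: del_at_Suc)
qed


lemma lcs_self: "lcs_len u u = length u"
  using lcs_ge[of u u u] lcs_le1[of u u] by simp


lemma chain:
  fixes F :: "'a list \<Rightarrow> 'b list" and M M' :: real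
  assumes H: "\<And>s j. j < length s \<Longrightarrow>
      real (lcs_len (F (del_at j s)) (F s)) \<ge> real (length (F (del_at j s))) - M \<and>
      real (lcs_len (F (del_at j s)) (F s)) \<ge> real (length (F s)) - M'"
  shows "subseq w u \<Longrightarrow>
      real (lcs_len (F w) (F u)) \<ge> real (length (F w)) - M * real (length u - length w) \<and>
      real (lcs_len (F w) (F u)) \<ge> real (length (F u)) - M' * real (length u - length w)"
proof (induction "length u - length w" arbitrary: u)
  case 0
  then have "length u \<le> length w" by simp
  moreover have "length w \<le> length u" using 0(2) list_emb_length by blast
  ultimately have "length u = length w" by simp
  then have "w = u" using subseq_same_length[OF 0(2)] by simp
  then show ?case by (simp add: lcs_self)
next
  case (Suc k)
  then have lt: "length w < length u" by simp
  then obtain j where j: "j < length u" "subseq w (del_at j u)" using del_exists Suc.prems by blast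
  let ?s = "del_at j u"
  have ls: "length ?s = length u - 1" using length_del_at j(1) by blast
  have k: "k = length ?s - length w" using Suc.hyps(2) ls by simp
  have IH: "real (lcs_len (F w) (F ?s)) \<ge> real (length (F w)) - M * real k \<and>
      real (lcs_len (F w) (F ?s)) \<ge> real (length (F ?s)) - M' * real k"
    using Suc.hyps(1)[OF k j(2)] k by simp
  have st: "real (lcs_len (F ?s) (F u)) \<ge> real (length (F ?s)) - M \<and>
      real (lcs_len (F ?s) (F u)) \<ge> real (length (F u)) - M'" using H[OF j(1)] .
  have tri: "real (lcs_len (F w) (F ?s)) + real (lcs_len (F ?s) (F u)) \<le> real (lcs_len (F w) (F u)) + real (length (F ?s))"
    using lcs_tri[of "F w" "F ?s" "F u"] by linarith
  have "real (length u - length w) = real k + 1" using Suc.hyps(2) by simp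
  then show ?case using IH st tri by (simp add: algebra_simps)
qed


lemma pair_bound:
  fixes F :: "'a list \<Rightarrow> 'b list" and M M' :: real
  assumes H: "\<And>s j. j < length s \<Longrightarrow>
      real (lcs_len (F (del_at j s)) (F s)) \<ge> real (length (F (del_at j s))) - M \<and>
      real (lcs_len (F (del_at j s)) (F s)) \<ge> real (length (F s)) - M'"
    and len: "length u = length v"
  shows "real (lcs_len (F u) (F v)) \<ge> real (length (F u)) - (M + M') * (real (length u) - real (lcs_len u v)) \<and>
         real (lcs_len (F u) (F v)) \<ge> real (length (F v)) - (M + M') * (real (length u) - real (lcs_len u v))"
proof -
  obtain w where w: "subseq w u" "subseq w v" "length w = lcs_len u v" using lcs_ex by blast
  have e1: "real (length u - length w) = real (length u) - real (lcs_len u v)"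
    using w list_emb_length by (metis of_nat_diff)
  have e2: "real (length v - length w) = real (length u) - real (lcs_len u v)"
    using w list_emb_length len by (metis of_nat_diff)
  have cu: "real (lcs_len (F w) (F u)) \<ge> real (length (F w)) - M * (real (length u) - real (lcs_len u v)) \<and>
      real (lcs_len (F w) (F u)) \<ge> real (length (F u)) - M' * (real (length u) - real (lcs_len u v))"
    using chain[OF H w(1)] e1 by simp
  have cv: "real (lcs_len (F w) (F v)) \<ge> real (length (F w)) - M * (real (length u) - real (lcs_len u v)) \<and>
      real (lcs_len (F w) (F v)) \<ge> real (length (F v)) - M' * (real (length u) - real (lcs_len u v))"
    using chain[OF H w(2)] e2 by simp
  have tri: "real (lcs_len (F u) (F w)) + real (lcs_len (F w) (F v)) \<le> real (lcs_len (F u) (F v)) + real (length (F w))"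
    using lcs_tri[of "F u" "F w" "F v"] by linarith
  have sy: "lcs_len (F u) (F w) = lcs_len (F w) (F u)" by (rule lcs_sym)
  show ?thesis using cu cv tri sy by (simp add: algebra_simps)
qed


lemma length_concat_le:
  "(\<And>i. i \<in> set xs \<Longrightarrow> length (g i) \<le> R) \<Longrightarrow> length (concat (map g xs)) \<le> length xs * R"
  by (induction xs) (auto simp: add_mono)


lemma upt_split: "i \<le> j \<Longrightarrow> j \<le> k \<Longrightarrow> [i..<k] = [i..<j] @ [j..<k]"
  using upt_add_eq_append[of i j "k - j"] by simp

lemma window_del:
  fixes f :: "'a list \<Rightarrow> 'a list" and R :: nat
  assumes d: "\<delta> \<ge> 1" and fR: "\<And>u. length u = \<delta> \<Longrightarrow> length (f u) \<le> R"
    and j: "j < length s"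
  shows "real (lcs_len (fstar f \<delta> (del_at j s)) (fstar f \<delta> s)) \<ge> real (length (fstar f \<delta> (del_at j s))) - (real \<delta> - 1) * real R \<and>
         real (lcs_len (fstar f \<delta> (del_at j s)) (fstar f \<delta> s)) \<ge> real (length (fstar f \<delta> s)) - real \<delta> * real R"
proof -
  let ?D = "del_at j s"
  have dr: "(1::real) \<le> real \<delta>" using d by simp
  have nn: "0 \<le> (real \<delta> - 1) * real R" "0 \<le> real \<delta> * real R" using dr by simp_all
  have lD: "length ?D = length s - 1" using length_del_at j by blast
  consider "length s < \<delta>" | "length s = \<delta>" | "length s > \<delta>" by linarith
  then show ?thesis
  proof cases
    case 1
    then have "fstar f \<delta> s = []" "fstar f \<delta> ?D = []" using lD by (auto simp: fstar_def)
    then have "length (fstar f \<delta> ?D) = 0" "length (fstar f \<delta> s) = 0" by simp_all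
    moreover have "0 \<le> real (lcs_len (fstar f \<delta> ?D) (fstar f \<delta> s))" by simp
    ultimately show ?thesis using nn by linarith
  next
    case 2
    then have e: "fstar f \<delta> ?D = []" using lD d by (auto simp: fstar_def)
    have "fstar f \<delta> s = f (take \<delta> s)" using 2 by (simp add: fstar_def)
    then have "length (fstar f \<delta> s) \<le> R" using fR 2 by simp
    moreover have "real R \<le> real \<delta> * real R" using mult_right_mono[OF dr, of "real R"] by simp
    moreover have "0 \<le> real (lcs_len (fstar f \<delta> ?D) (fstar f \<delta> s))" by simp
    moreover have "length (fstar f \<delta> ?D) = 0" using e by simp
    ultimately show ?thesis using nn by (simp only: of_nat_le_iff[symmetric]) linarith
  next
    case 3
    define N where "N = length s - \<delta> + 1"
    define g where "g = (\<lambda>i. f (take \<delta> (drop i s)))"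
    define h where "h = (\<lambda>i. f (take \<delta> (drop i ?D)))"
    define a where "a = j + 1 - \<delta>"
    define b where "b = min (j + 1) N"
    define b' where "b' = min j (N - 1)"
    have Fs: "fstar f \<delta> s = concat (map g [0..<N])" using 3 by (simp add: fstar_def N_def g_def)
    have c1: "\<delta> \<le> length ?D" using 3 lD by simp
    have c2: "length ?D - \<delta> + 1 = N - 1" using 3 lD N_def by simp
    have FD: "fstar f \<delta> ?D = concat (map h [0..<N - 1])"
      by (simp only: fstar_def if_P[OF c1] c2 h_def)
    have ab: "a \<le> b'" "b' \<le> N - 1" "b = Suc b'" "b \<le> N" "a \<le> b"
      using j 3 d by (auto simp: a_def b_def b'_def N_def)
    have us: "[0..<N] = [0..<a] @ [a..<b] @ [b..<N]"
      using upt_split[of 0 a N] upt_split[of a b N] ab by simp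
    have uD: "[0..<N - 1] = [0..<a] @ [a..<b'] @ [b'..<N - 1]"
      using upt_split[of 0 a "N - 1"] upt_split[of a b' "N - 1"] ab by simp
    have hP: "map h [0..<a] = map g [0..<a]"
    proof (rule map_cong[OF refl])
      fix i assume "i \<in> set [0..<a]"
      then have i: "i + \<delta> \<le> j" by (auto simp: a_def)
      have "take \<delta> (drop i ?D) = take \<delta> (drop i s)"
        using i j by (simp add: del_at_def take_drop min_def)
      then show "h i = g i" by (simp add: h_def g_def)
    qed
    have hS: "map h [b'..<N - 1] = map g [b..<N]"
    proof -
      have "map h [b'..<N - 1] = map (g \<circ> Suc) [b'..<N - 1]"
      proof (rule map_cong[OF refl])
        fix i assume "i \<in> set [b'..<N - 1]"
        then have i: "j \<le> i" by (auto simp: b'_def)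
        have "drop i ?D = drop (Suc i) s"
          using i j by (simp add: del_at_def)
        then show "h i = (g \<circ> Suc) i" by (simp add: h_def g_def)
      qed
      also have "\<dots> = map g (map Suc [b'..<N - 1])" by simp
      also have "map Suc [b'..<N - 1] = [b..<N]" using ab map_Suc_upt 3 N_def by simp
      finally show ?thesis .
    qed
    define P where "P = concat (map g [0..<a])"
    define X where "X = concat (map g [a..<b])"
    define S where "S = concat (map g [b..<N])"
    define Y where "Y = concat (map h [a..<b'])"
    have Fs2: "fstar f \<delta> s = P @ X @ S" using Fs us by (simp add: P_def X_def S_def)
    have FD2: "fstar f \<delta> ?D = P @ Y @ S" by (simp only: FD uD map_append concat_append hP hS P_def Y_def S_def)
    have lc: "length P + length S \<le> lcs_len (fstar f \<delta> ?D) (fstar f \<delta> s)"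
      using lcs_common[of P S Y X] Fs2 FD2 by simp
    have X: "length X \<le> (b - a) * R"
      unfolding X_def
    proof -
      have "length (concat (map g [a..<b])) \<le> length [a..<b] * R"
      proof (rule length_concat_le)
        fix i assume "i \<in> set [a..<b]"
        then have "i < N" using ab by auto
        then have "length (take \<delta> (drop i s)) = \<delta>" using 3 by (auto simp: N_def)
        then show "length (g i) \<le> R" using fR by (simp add: g_def)
      qed
      then show "length (concat (map g [a..<b])) \<le> (b - a) * R" by simp
    qed
    have Y: "length Y \<le> (b' - a) * R"
      unfolding Y_def
    proof -
      have "length (concat (map h [a..<b'])) \<le> length [a..<b'] * R"
      proof (rule length_concat_le)
        fix i assume "i \<in> set [a..<b']"
        then have "i < N - 1" using ab by auto
        then have "length (take \<delta> (drop i ?D)) = \<delta>" using 3 lD by (auto simp: N_def)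
        then show "length (h i) \<le> R" using fR by (simp add: h_def)
      qed
      then show "length (concat (map h [a..<b'])) \<le> (b' - a) * R" by simp
    qed
    have bj: "b \<le> j + 1" "b' \<le> j" by (simp_all add: b_def b'_def)
    have ba: "b - a \<le> \<delta>" "b' - a \<le> \<delta> - 1" using bj d unfolding a_def by arith+
    have X2: "real (length X) \<le> real \<delta> * real R"
    proof -
      have "(b - a) * R \<le> \<delta> * R" using ba by simp
      then show ?thesis using X by (metis of_nat_le_iff of_nat_mult le_trans)
    qed
    have Y2: "real (length Y) \<le> (real \<delta> - 1) * real R"
    proof -
      have "(b' - a) * R \<le> (\<delta> - 1) * R" using ba by simp
      then have "length Y \<le> (\<delta> - 1) * R" using Y by linarith
      then have "real (length Y) \<le> real ((\<delta> - 1) * R)" by linarith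
      then show ?thesis using d by (simp add: of_nat_diff)
    qed
    have "real (length P) + real (length S) \<le> real (lcs_len (fstar f \<delta> ?D) (fstar f \<delta> s))"
      using lc by linarith
    then show ?thesis using Fs2 FD2 X2 Y2 by simp
  qed
qed



definition Phi :: "('a list \<Rightarrow> 'a list) \<Rightarrow> nat \<Rightarrow> (nat \<Rightarrow> 'a) \<Rightarrow> nat \<Rightarrow> 'a list" where
  "Phi f \<delta> x m = concat (map (\<lambda>i. f (window \<delta> x i)) [0..<m])"

lemma fstar_pre: "\<delta> \<ge> 1 \<Longrightarrow> fstar f \<delta> (pre x l) = Phi f \<delta> x (l + 1 - \<delta>)"
proof (cases "\<delta> \<le> l")
  case True
  assume d: "\<delta> \<ge> 1"
  have "fstar f \<delta> (pre x l) = concat (map (\<lambda>i. f (take \<delta> (drop i (pre x l)))) [0..<l + 1 - \<delta>])"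
  proof -
    have c: "\<delta> \<le> length (pre x l)" using True by (simp add: pre_def)
    have c2: "length (pre x l) - \<delta> + 1 = l + 1 - \<delta>" using True by (simp add: pre_def)
    show ?thesis by (simp only: fstar_def if_P[OF c] c2)
  qed
  also have "\<dots> = Phi f \<delta> x (l + 1 - \<delta>)" unfolding Phi_def
  proof (rule arg_cong[where f=concat], rule map_cong[OF refl])
    fix i assume "i \<in> set [0..<l + 1 - \<delta>]"
    then have "i + \<delta> \<le> l" by auto
    then show "f (take \<delta> (drop i (pre x l))) = f (window \<delta> x i)"
      by (simp add: pre_def window_def drop_map take_map)
  qed
  finally show ?thesis .
next
  case False
  then show ?thesis by (simp add: fstar_def Phi_def pre_def)
qed

lemma Phi_Suc: "Phi f \<delta> x (Suc m) = Phi f \<delta> x m @ f (window \<delta> x m)"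
  by (simp add: Phi_def)

lemma Phi_prefix: "m \<le> m' \<Longrightarrow> \<exists>r. Phi f \<delta> x m' = Phi f \<delta> x m @ r"
proof (induction m' rule: dec_induct)
  case base then show ?case by simp
next
  case (step k) then show ?case by (auto simp: Phi_Suc)
qed

lemma window_len: "length (window \<delta> x i) = \<delta>" by (simp add: window_def)

lemma length_Phi_ge:
  assumes ne: "\<And>u. length u = \<delta> \<Longrightarrow> f u \<noteq> []"
  shows "m \<le> length (Phi f \<delta> x m)"
proof (induction m)
  case 0 then show ?case by simp
next
  case (Suc m)
  have "f (window \<delta> x m) \<noteq> []" using ne window_len by blast
  then have a: "0 < length (f (window \<delta> x m))" by simp
  have "length (Phi f \<delta> x (Suc m)) = length (Phi f \<delta> x m) + length (f (window \<delta> x m))"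
    by (simp add: Phi_Suc)
  then show ?case using Suc a by linarith
qed

lemma length_Phi_le:
  assumes fR: "\<And>u. length u = \<delta> \<Longrightarrow> length (f u) \<le> R"
  shows "length (Phi f \<delta> x m) \<le> m * R"
proof -
  have "length (concat (map (\<lambda>i. f (window \<delta> x i)) [0..<m])) \<le> length [0..<m] * R"
    by (rule length_concat_le) (simp add: fR window_len)
  then show ?thesis by (simp add: Phi_def)
qed

lemma length_Phi_geL:
  assumes Lx: "\<And>i. real (length (f (window \<delta> x i))) \<ge> L"
  shows "real m * L \<le> real (length (Phi f \<delta> x m))"
proof (induction m)
  case 0 then show ?case by simp
next
  case (Suc m)
  then show ?case using Lx[of m] by (simp add: Phi_Suc algebra_simps)
qed

lemma dill_eq: "\<delta> \<ge> 1 \<Longrightarrow> dill f \<delta> x k = Phi f \<delta> x (Suc k) ! k"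
  unfolding dill_def using fstar_pre[where \<delta>=\<delta> and f=f and x=x and l="k + \<delta>"] by simp

lemma pre_dill:
  assumes d: "\<delta> \<ge> 1" and ne: "\<And>u. length u = \<delta> \<Longrightarrow> f u \<noteq> []"
    and n: "n \<le> length (Phi f \<delta> x m)"
  shows "pre (dill f \<delta> x) n = take n (Phi f \<delta> x m)"
proof (rule nth_equalityI)
  show "length (pre (dill f \<delta> x) n) = length (take n (Phi f \<delta> x m))" using n by (simp add: pre_def)
next
  fix k assume "k < length (pre (dill f \<delta> x) n)"
  then have k: "k < n" by (simp add: pre_def)
  obtain r1 where r1: "Phi f \<delta> x (max m (Suc k)) = Phi f \<delta> x m @ r1" using Phi_prefix by (metis max.cobounded1)
  obtain r2 where r2: "Phi f \<delta> x (max m (Suc k)) = Phi f \<delta> x (Suc k) @ r2" using Phi_prefix by (metis max.cobounded2)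
  have k1: "k < length (Phi f \<delta> x m)" using k n by simp
  have k2: "k < length (Phi f \<delta> x (Suc k))" using length_Phi_ge[where f=f and \<delta>=\<delta> and m="Suc k" and x=x, OF ne] by simp
  have "Phi f \<delta> x (Suc k) ! k = Phi f \<delta> x m ! k"
    using r1 r2 k1 k2 by (metis nth_append)
  then show "pre (dill f \<delta> x) n ! k = take n (Phi f \<delta> x m) ! k"
    using k dill_eq[OF d, of f x k] by (simp add: pre_def)
qed

lemma limsup_comp_le:
  fixes u :: "nat \<Rightarrow> ereal"
  assumes h: "filterlim h at_top sequentially"
  shows "limsup (\<lambda>n. u (h n)) \<le> limsup u"
proof -
  have "\<forall>y>limsup u. eventually (\<lambda>n. y > u (h n)) sequentially"
  proof (intro allI impI)
    fix y assume "y > limsup u"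
    then have "eventually (\<lambda>m. y > u m) sequentially" using Limsup_le_iff[where F=sequentially and X=u and C="limsup u"] by auto
    then show "eventually (\<lambda>n. y > u (h n)) sequentially" using h filterlim_iff by fastforce
  qed
  then show ?thesis using Limsup_le_iff[where F=sequentially and X="\<lambda>n. u (h n)" and C="limsup u"] by auto
qed



lemma core:
  fixes f :: "'a list \<Rightarrow> 'a list" and x y :: "nat \<Rightarrow> 'a" and K L :: real and R :: nat
  assumes d: "\<delta> \<ge> 1" and ne: "\<And>u. length u = \<delta> \<Longrightarrow> f u \<noteq> []"
    and fR: "\<And>u. length u = \<delta> \<Longrightarrow> length (f u) \<le> R"
    and L: "L > 0" and K: "K \<ge> 0"
    and Lx: "\<And>i. real (length (f (window \<delta> x i))) \<ge> L"
    and H: "\<And>l. real (lcs_len (fstar f \<delta> (pre x l)) (fstar f \<delta> (pre y l)))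
              \<ge> real (length (fstar f \<delta> (pre x l))) - K * (real l - real (lcs_len (pre x l) (pre y l))) \<and>
            real (lcs_len (fstar f \<delta> (pre x l)) (fstar f \<delta> (pre y l)))
              \<ge> real (length (fstar f \<delta> (pre y l))) - K * (real l - real (lcs_len (pre x l) (pre y l)))"
  shows "feldman (dill f \<delta> x) (dill f \<delta> y) \<le> ereal (K / L) * feldman x y"
proof -
  define e where "e l = real l - real (lcs_len (pre x l) (pre y l))" for l
  define g where "g l = lev (pre x l) (pre y l) / real l" for l
  have lev_pre: "lev (pre u l) (pre v l) = real l - real (lcs_len (pre u l) (pre v l))"
    for u v :: "nat \<Rightarrow> 'a" and l
    by (simp add: lev_def pre_def)
  have lcsl: "lcs_len (pre x l) (pre y l) \<le> l" for l
    using lcs_le1[of "pre x l" "pre y l"] by (simp add: pre_def)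
  have e_ge0: "0 \<le> e l" for l using lcsl[of l] by (simp add: e_def)
  have e_le: "e l \<le> real l" for l by (simp add: e_def)
  have eg: "e l = g l * real l" for l
  proof (cases "l = 0")
    case True
    then show ?thesis using e_ge0[of l] e_le[of l] by simp
  next
    case False
    then show ?thesis by (simp add: g_def e_def lev_pre)
  qed
  have g0: "0 \<le> g l" for l using e_ge0[of l] by (simp add: g_def lev_pre e_def)
  have g1: "g l \<le> 1" for l
  proof (cases "l = 0")
    case True then show ?thesis by (simp add: g_def)
  next
    case False
    then show ?thesis using e_le[of l] by (simp add: g_def lev_pre e_def)
  qed
  define q where "q n = (LEAST q. n < length (Phi f \<delta> x q))" for n
  define p where "p n = q n - 1" for n
  have q_ex: "n < length (Phi f \<delta> x (Suc n))" for n
    using length_Phi_ge[where f=f and \<delta>=\<delta> and m="Suc n" and x=x, OF ne] by simp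
  have q1: "n < length (Phi f \<delta> x (q n))" for n
    unfolding q_def by (rule LeastI[of _ "Suc n"]) (rule q_ex)
  have q0: "q n \<noteq> 0" for n
  proof
    assume "q n = 0"
    then show False using q1[of n] by (simp add: Phi_def)
  qed
  have pq: "Suc (p n) = q n" for n using q0[of n] by (simp add: p_def)
  have p1: "length (Phi f \<delta> x (p n)) \<le> n" for n
  proof -
    have "p n < q n" using pq[of n] by simp
    then have "\<not> n < length (Phi f \<delta> x (p n))" unfolding q_def by (rule not_less_Least)
    then show ?thesis by simp
  qed
  have p2: "n < length (Phi f \<delta> x (p n)) + R" for n
  proof -
    have "n < length (Phi f \<delta> x (Suc (p n)))" using q1[of n] pq[of n] by simp
    moreover have "length (f (window \<delta> x (p n))) \<le> R" using fR window_len by blast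
    ultimately show ?thesis by (simp add: Phi_Suc)
  qed
  have pL: "real (p n) * L \<le> real n" for n
    using length_Phi_geL[where f=f and \<delta>=\<delta> and x=x and L=L and m="p n", OF Lx] p1[of n] by linarith
  have pn: "p n \<le> n" for n
    using length_Phi_ge[where f=f and \<delta>=\<delta> and m="p n" and x=x, OF ne] p1[of n] by linarith
  define l where "l n = p n + \<delta> - 1" for n
  have lp: "l n + 1 - \<delta> = p n" for n using d by (simp add: l_def)
  have fx: "fstar f \<delta> (pre x (l n)) = Phi f \<delta> x (p n)" for n using fstar_pre[OF d] lp by metis
  have fy: "fstar f \<delta> (pre y (l n)) = Phi f \<delta> y (p n)" for n using fstar_pre[OF d] lp by metis
  have key: "real n - real R - K * e (l n) \<le> real (lcs_len (pre (dill f \<delta> x) n) (pre (dill f \<delta> y) n))" for n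
  proof -
    define A where "A = Phi f \<delta> x (p n)"
    define B where "B = Phi f \<delta> y (p n)"
    have Hl: "real (lcs_len A B) \<ge> real (length A) - K * e (l n)"
             "real (lcs_len A B) \<ge> real (length B) - K * e (l n)"
      using H[of "l n"] fx[of n] fy[of n] by (simp_all add: A_def B_def e_def)
    have ax: "pre (dill f \<delta> x) n = take n (Phi f \<delta> x (Suc n))"
      using pre_dill[OF d ne] q_ex[of n] by simp
    obtain r where r: "Phi f \<delta> x (Suc n) = A @ r" using Phi_prefix[of "p n" "Suc n"] pn[of n]
      unfolding A_def by (metis le_SucI)
    have lA: "length A \<le> n" using p1 by (simp add: A_def)
    have "take n (A @ r) = A @ take (n - length A) r" using lA by simp
    then have sA: "subseq A (pre (dill f \<delta> x) n)" using ax r by (simp add: subseq_rev_drop_many)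
    have Rn: "real n < real (length A) + real R" using p2[of n] by (simp add: A_def)
    show ?thesis
    proof (cases "length B \<le> n")
      case True
      have ay: "pre (dill f \<delta> y) n = take n (Phi f \<delta> y (Suc n))"
        using pre_dill[OF d ne] length_Phi_ge[where f=f and \<delta>=\<delta> and m="Suc n" and x=y, OF ne] by simp
      obtain r' where r': "Phi f \<delta> y (Suc n) = B @ r'" using Phi_prefix[of "p n" "Suc n"] pn[of n]
        unfolding B_def by (metis le_SucI)
      have "take n (B @ r') = B @ take (n - length B) r'" using True by simp
      then have sB: "subseq B (pre (dill f \<delta> y) n)" using ay r' by (simp add: subseq_rev_drop_many)
      have "lcs_len A B \<le> lcs_len (pre (dill f \<delta> x) n) (pre (dill f \<delta> y) n)"
        using lcs_mono[OF sA sB] .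
      then show ?thesis using Hl(1) Rn by linarith
    next
      case False
      have bY: "pre (dill f \<delta> y) n = take n B"
        using pre_dill[OF d ne, where n=n and x=y and m="p n"] False by (simp add: B_def)
      have t: "lcs_len A B \<le> lcs_len A (take n B) + (length B - n)" by (rule lcs_take)
      have m: "lcs_len A (take n B) \<le> lcs_len (pre (dill f \<delta> x) n) (take n B)"
        using lcs_mono[OF sA subseq_order.order_refl] .
      have "real (lcs_len A B) \<le> real (lcs_len (pre (dill f \<delta> x) n) (take n B)) + (real (length B) - real n)"
        using t m False by linarith
      then show ?thesis using Hl(2) by (simp add: bY)
    qed
  qed
  define c where "c = real R + K * (real \<delta> - 1)"
  have bound: "lev (pre (dill f \<delta> x) n) (pre (dill f \<delta> y) n) / real n \<le> (K / L) * g (l n) + c / real n"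
    if n: "n > 0" for n
  proof -
    have lv: "lev (pre (dill f \<delta> x) n) (pre (dill f \<delta> y) n) \<le> real R + K * e (l n)"
      using key[of n] lev_pre[of "dill f \<delta> x" n "dill f \<delta> y"] by linarith
    have rl: "real (l n) = real (p n) + real \<delta> - 1" using d by (simp add: l_def)
    have kg: "0 \<le> K * g (l n)" using K g0 by simp
    have pnL: "real (p n) \<le> real n / L" using pL[of n] L by (simp add: field_simps)
    have s1: "K * g (l n) * real (p n) \<le> K * g (l n) * (real n / L)"
      using mult_left_mono[OF pnL kg] .
    have s2: "K * g (l n) * (real \<delta> - 1) \<le> K * (real \<delta> - 1)"
    proof -
      have "0 \<le> K * (real \<delta> - 1)" using K d by simp
      then show ?thesis using mult_right_mono[OF g1[of "l n"], of "K * (real \<delta> - 1)"] by (simp add: algebra_simps)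
    qed
    have e2: "e (l n) = g (l n) * real (p n) + g (l n) * (real \<delta> - 1)"
      using eg[of "l n"] rl by (simp add: algebra_simps)
    have "K * e (l n) = K * (g (l n) * real (p n) + g (l n) * (real \<delta> - 1))"
      using e2 by simp
    then have "K * e (l n) = K * g (l n) * real (p n) + K * g (l n) * (real \<delta> - 1)"
      by (simp add: algebra_simps)
    then have "K * e (l n) \<le> (K / L) * g (l n) * real n + K * (real \<delta> - 1)"
      using s1 s2 by (simp add: algebra_simps)
    then have "lev (pre (dill f \<delta> x) n) (pre (dill f \<delta> y) n) \<le> (K / L) * g (l n) * real n + c"
      using lv by (simp add: c_def)
    then have "lev (pre (dill f \<delta> x) n) (pre (dill f \<delta> y) n) / real n \<le> ((K / L) * g (l n) * real n + c) / real n"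
      using n by (simp add: divide_right_mono)
    also have "\<dots> = (K / L) * g (l n) + c / real n" using n by (simp add: field_simps)
    finally show ?thesis .
  qed
  have lim: "filterlim l at_top sequentially"
    unfolding filterlim_at_top
  proof
    fix Z
    show "eventually (\<lambda>n. Z \<le> l n) sequentially"
      unfolding eventually_sequentially
    proof (intro exI allI impI)
      fix n assume a: "Suc Z * R \<le> n"
      have a2: "Z * R + R \<le> n" using a by simp
      have b: "n < p n * R + R"
        using p2[of n] length_Phi_le[where f=f and \<delta>=\<delta> and x=x and R=R and m="p n", OF fR] by linarith
      have "Z * R < p n * R" using a2 b by linarith
      then have "Z < p n" using mult_less_cancel2 by blast
      then have "Suc Z < Suc (p n)" by simp
      then show "Z \<le> l n" using d by (simp add: l_def)
    qed
  qed
  have KL: "0 \<le> K / L" using K L by simp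
  have "feldman (dill f \<delta> x) (dill f \<delta> y) \<le> limsup (\<lambda>n. ereal (K / L) * ereal (g (l n)) + ereal (c / real n))"
    unfolding feldman_def
  proof (rule Limsup_mono)
    show "eventually (\<lambda>n. ereal (lev (pre (dill f \<delta> x) n) (pre (dill f \<delta> y) n) / real n)
           \<le> ereal (K / L) * ereal (g (l n)) + ereal (c / real n)) sequentially"
      unfolding eventually_sequentially
      using bound by (intro exI[of _ 1]) auto
  qed
  also have "\<dots> \<le> limsup (\<lambda>n. ereal (K / L) * ereal (g (l n))) + limsup (\<lambda>n. ereal (c / real n))"
    by (rule ereal_limsup_add_mono)
  also have "limsup (\<lambda>n. ereal (c / real n)) = 0"
  proof -
    have "(\<lambda>n. ereal (c / real n)) \<longlonglongrightarrow> ereal 0"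
      by (intro tendsto_ereal lim_const_over_n)
    then show ?thesis using lim_imp_Limsup[OF trivial_limit_sequentially] zero_ereal_def by metis
  qed
  also have "limsup (\<lambda>n. ereal (K / L) * ereal (g (l n))) = ereal (K / L) * limsup (\<lambda>n. ereal (g (l n)))"
    by (rule limsup_ereal_mult_left[OF KL])
  also have "\<dots> \<le> ereal (K / L) * limsup (\<lambda>m. ereal (g m))"
    by (rule ereal_mult_left_mono[OF limsup_comp_le[OF lim]]) (use KL in simp)
  also have "limsup (\<lambda>m. ereal (g m)) = feldman x y" by (simp add: feldman_def g_def)
  finally show ?thesis by simp
qed



lemma rule_set_finite:
  fixes f :: "'a::finite list \<Rightarrow> 'a list"
  shows "finite {length (f u) | u. length u = \<delta>}"
proof -
  have "finite {xs :: 'a list. set xs \<subseteq> UNIV \<and> length xs = \<delta>}"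
    by (rule finite_lists_length_eq) simp
  then have "finite {xs :: 'a list. length xs = \<delta>}" by simp
  then have "finite ((\<lambda>u. length (f u)) ` {xs :: 'a list. length xs = \<delta>})" by simp
  moreover have "{length (f u) | u. length u = \<delta>} = (\<lambda>u. length (f u)) ` {xs. length xs = \<delta>}" by auto
  ultimately show ?thesis by simp
qed

lemma rule_max_ge:
  fixes f :: "'a::finite list \<Rightarrow> 'a list"
  shows "length u = \<delta> \<Longrightarrow> length (f u) \<le> rule_max f \<delta>"
  unfolding rule_max_def using rule_set_finite[of f \<delta>] by (intro Max_ge) auto

lemma rule_min_le:
  fixes f :: "'a::finite list \<Rightarrow> 'a list"
  shows "length u = \<delta> \<Longrightarrow> rule_min f \<delta> \<le> length (f u)"
  unfolding rule_min_def using rule_set_finite[of f \<delta>] by (intro Min_le) auto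

lemma rule_min_pos:
  fixes f :: "'a::finite list \<Rightarrow> 'a list"
  assumes ne: "\<And>u. length u = \<delta> \<Longrightarrow> f u \<noteq> []"
  shows "0 < rule_min f \<delta>"
proof -
  have "rule_min f \<delta> \<in> {length (f u) | u. length u = \<delta>}"
    unfolding rule_min_def using rule_set_finite[of f \<delta>]
    by (intro Min_in) (auto intro: exI[of _ "replicate \<delta> undefined"])
  then show ?thesis using ne by auto
qed

lemma part2:
  fixes f :: "'a::finite list \<Rightarrow> 'a list" and L :: real and x y :: "nat \<Rightarrow> 'a"
  assumes d: "\<delta> \<ge> 1" and ne: "\<And>u. length u = \<delta> \<Longrightarrow> f u \<noteq> []"
    and L: "L > 0" and Lx: "\<And>i. real (length (f (window \<delta> x i))) \<ge> L"
  shows "feldman (dill f \<delta> x) (dill f \<delta> y)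
               \<le> ereal ((2 * real \<delta> - 1) * real (rule_max f \<delta>) / L) * feldman x y"
proof -
  let ?R = "rule_max f \<delta>"
  have fR: "\<And>u. length u = \<delta> \<Longrightarrow> length (f u) \<le> ?R" by (rule rule_max_ge)
  have Hd: "\<And>s j. j < length s \<Longrightarrow>
      real (lcs_len (fstar f \<delta> (del_at j s)) (fstar f \<delta> s)) \<ge> real (length (fstar f \<delta> (del_at j s))) - (real \<delta> - 1) * real ?R \<and>
      real (lcs_len (fstar f \<delta> (del_at j s)) (fstar f \<delta> s)) \<ge> real (length (fstar f \<delta> s)) - real \<delta> * real ?R"
    using window_del[where f=f and \<delta>=\<delta> and R="rule_max f \<delta>", OF d fR] by blast
  have K: "(real \<delta> - 1) * real ?R + real \<delta> * real ?R = (2 * real \<delta> - 1) * real ?R"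
    by (simp add: algebra_simps)
  have K0: "0 \<le> (2 * real \<delta> - 1) * real ?R" using d by simp
  show ?thesis
  proof (rule core[where f=f and \<delta>=\<delta> and x=x and y=y, OF d ne fR L K0 Lx])
    fix l
    show "real (lcs_len (fstar f \<delta> (pre x l)) (fstar f \<delta> (pre y l)))
              \<ge> real (length (fstar f \<delta> (pre x l))) - (2 * real \<delta> - 1) * real ?R * (real l - real (lcs_len (pre x l) (pre y l))) \<and>
            real (lcs_len (fstar f \<delta> (pre x l)) (fstar f \<delta> (pre y l)))
              \<ge> real (length (fstar f \<delta> (pre y l))) - (2 * real \<delta> - 1) * real ?R * (real l - real (lcs_len (pre x l) (pre y l)))"
      using pair_bound[where F="fstar f \<delta>", OF Hd, of "pre x l" "pre y l"] K by (simp add: pre_def)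
  qed
qed

lemma part3:
  fixes f :: "'a::finite list \<Rightarrow> 'a list"
  assumes d: "\<delta> \<ge> 1" and ne: "\<And>u. length u = \<delta> \<Longrightarrow> f u \<noteq> []"
  shows "lipschitz_feldman ((2 * real \<delta> - 1) * real (rule_max f \<delta>) / real (rule_min f \<delta>)) (dill f \<delta>)"
  unfolding lipschitz_feldman_def
proof (intro allI)
  fix x y :: "nat \<Rightarrow> 'a"
  show "feldman (dill f \<delta> x) (dill f \<delta> y) \<le> ereal ((2 * real \<delta> - 1) * real (rule_max f \<delta>) / real (rule_min f \<delta>)) * feldman x y"
  proof (rule part2[OF d ne])
    show "0 < real (rule_min f \<delta>)" using rule_min_pos[OF ne] by simp
    fix i show "real (rule_min f \<delta>) \<le> real (length (f (window \<delta> x i)))"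
      using rule_min_le[OF window_len, of f \<delta> x i] by simp
  qed
qed

lemma part1:
  fixes f :: "'a::finite list \<Rightarrow> 'a list" and M M' :: nat
  assumes d: "\<delta> \<ge> 1" and ne: "\<And>u. length u = \<delta> \<Longrightarrow> f u \<noteq> []"
    and hyp: "\<forall>u :: 'a list. \<forall>j < length u.
          lev (fstar f \<delta> (del_at j u)) (fstar f \<delta> u)
            \<le> real M + (real (length (fstar f \<delta> u)) - real (length (fstar f \<delta> (del_at j u)))) / 2
        \<and> lev (fstar f \<delta> (del_at j u)) (fstar f \<delta> u)
            \<le> real M' - (real (length (fstar f \<delta> u)) - real (length (fstar f \<delta> (del_at j u)))) / 2"
  shows "lipschitz_feldman ((real M + real M') / real (rule_min f \<delta>)) (dill f \<delta>)"
  unfolding lipschitz_feldman_def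
proof (intro allI)
  fix x y :: "nat \<Rightarrow> 'a"
  let ?R = "rule_max f \<delta>"
  have fR: "\<And>u. length u = \<delta> \<Longrightarrow> length (f u) \<le> ?R" by (rule rule_max_ge)
  have Hd: "\<And>s j. j < length s \<Longrightarrow>
      real (lcs_len (fstar f \<delta> (del_at j s)) (fstar f \<delta> s)) \<ge> real (length (fstar f \<delta> (del_at j s))) - real M \<and>
      real (lcs_len (fstar f \<delta> (del_at j s)) (fstar f \<delta> s)) \<ge> real (length (fstar f \<delta> s)) - real M'"
  proof -
    fix s :: "'a list" and j assume jl: "j < length s"
    have h: "lev (fstar f \<delta> (del_at j s)) (fstar f \<delta> s)
            \<le> real M + (real (length (fstar f \<delta> s)) - real (length (fstar f \<delta> (del_at j s)))) / 2
        \<and> lev (fstar f \<delta> (del_at j s)) (fstar f \<delta> s)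
            \<le> real M' - (real (length (fstar f \<delta> s)) - real (length (fstar f \<delta> (del_at j s)))) / 2"
      using hyp jl by blast
    show "real (lcs_len (fstar f \<delta> (del_at j s)) (fstar f \<delta> s)) \<ge> real (length (fstar f \<delta> (del_at j s))) - real M \<and>
      real (lcs_len (fstar f \<delta> (del_at j s)) (fstar f \<delta> s)) \<ge> real (length (fstar f \<delta> s)) - real M'"
    proof
      show "real (lcs_len (fstar f \<delta> (del_at j s)) (fstar f \<delta> s)) \<ge> real (length (fstar f \<delta> (del_at j s))) - real M"
        using conjunct1[OF h] unfolding lev_def by (simp add: field_simps; linarith)
      show "real (lcs_len (fstar f \<delta> (del_at j s)) (fstar f \<delta> s)) \<ge> real (length (fstar f \<delta> s)) - real M'"
        using conjunct2[OF h] unfolding lev_def by (simp add: field_simps; linarith)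
    qed
  qed
  have K0: "0 \<le> real M + real M'" by simp
  have L: "0 < real (rule_min f \<delta>)" using rule_min_pos[OF ne] by simp
  have Lx: "\<And>i. real (rule_min f \<delta>) \<le> real (length (f (window \<delta> x i)))"
    using rule_min_le[OF window_len] by simp
  show "feldman (dill f \<delta> x) (dill f \<delta> y) \<le> ereal ((real M + real M') / real (rule_min f \<delta>)) * feldman x y"
  proof (rule core[where f=f and \<delta>=\<delta> and x=x and y=y, OF d ne fR L K0 Lx])
    fix l
    show "real (lcs_len (fstar f \<delta> (pre x l)) (fstar f \<delta> (pre y l)))
              \<ge> real (length (fstar f \<delta> (pre x l))) - (real M + real M') * (real l - real (lcs_len (pre x l) (pre y l))) \<and>
            real (lcs_len (fstar f \<delta> (pre x l)) (fstar f \<delta> (pre y l)))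
              \<ge> real (length (fstar f \<delta> (pre y l))) - (real M + real M') * (real l - real (lcs_len (pre x l) (pre y l)))"
      using pair_bound[where F="fstar f \<delta>", OF Hd, of "pre x l" "pre y l"] by (simp add: pre_def)
  qed
qed

definition sub_rule :: "('a \<Rightarrow> 'a list) \<Rightarrow> 'a list \<Rightarrow> 'a list" where
  "sub_rule \<tau> u = \<tau> (hd u)"

lemma sub_ne: "(\<forall>a. \<tau> a \<noteq> []) \<Longrightarrow> length u = 1 \<Longrightarrow> sub_rule \<tau> u \<noteq> []"
  by (simp add: sub_rule_def)

lemma window1: "window 1 x i = [x i]" by (simp add: window_def)
lemma window1': "window (Suc 0) x i = [x i]" by (simp add: window_def)

lemma subst_dill: "subst_inf \<tau> z = dill (sub_rule \<tau>) 1 z"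
proof
  fix k
  have "Phi (sub_rule \<tau>) 1 z (Suc k) = concat (map (\<lambda>i. \<tau> (z i)) [0..<k + 1])"
    by (simp add: Phi_def window1 window1' sub_rule_def)
  then show "subst_inf \<tau> z k = dill (sub_rule \<tau>) 1 z k"
    using dill_eq[of 1 "sub_rule \<tau>" z k] by (simp add: subst_inf_def)
qed

lemma sub_set: "{length (sub_rule \<tau> u) | u. length u = 1} = range (\<lambda>a. length (\<tau> a))"
proof
  show "{length (sub_rule \<tau> u) | u. length u = 1} \<subseteq> range (\<lambda>a. length (\<tau> a))"
    by (auto simp: sub_rule_def)
  show "range (\<lambda>a. length (\<tau> a)) \<subseteq> {length (sub_rule \<tau> u) | u. length u = 1}"
  proof
    fix n assume "n \<in> range (\<lambda>a. length (\<tau> a))"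
    then obtain a where "n = length (\<tau> a)" by auto
    then show "n \<in> {length (sub_rule \<tau> u) | u. length u = 1}"
      by (intro CollectI exI[of _ "[a]"]) (simp add: sub_rule_def)
  qed
qed

lemma sub_max: "rule_max (sub_rule \<tau>) 1 = subst_max \<tau>"
  unfolding rule_max_def subst_max_def sub_set ..

lemma sub_min: "rule_min (sub_rule \<tau>) 1 = subst_min \<tau>"
  unfolding rule_min_def subst_min_def sub_set ..

lemma sub_max': "rule_max (sub_rule \<tau>) (Suc 0) = subst_max \<tau>"
  using sub_max by simp

lemma sub_min': "rule_min (sub_rule \<tau>) (Suc 0) = subst_min \<tau>"
  using sub_min by simp



theorem corollaryc:
  fixes f :: "'a::finite list \<Rightarrow> 'a list" and \<delta> :: nat
  assumes delta: "\<delta> \<ge> 1"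
    and nonerasing: "\<And>u. length u = \<delta> \<Longrightarrow> f u \<noteq> []"
  shows
   "(\<forall>M M' :: nat.
       (\<forall>u :: 'a list. \<forall>j < length u.
          lev (fstar f \<delta> (del_at j u)) (fstar f \<delta> u)
            \<le> real M + (real (length (fstar f \<delta> u)) - real (length (fstar f \<delta> (del_at j u)))) / 2
        \<and> lev (fstar f \<delta> (del_at j u)) (fstar f \<delta> u)
            \<le> real M' - (real (length (fstar f \<delta> u)) - real (length (fstar f \<delta> (del_at j u)))) / 2)
       \<longrightarrow> lipschitz_feldman ((real M + real M') / real (rule_min f \<delta>)) (dill f \<delta>))
    \<and> (\<forall>(L::real) (x :: nat \<Rightarrow> 'a). L > 0 \<and> (\<forall>i. real (length (f (window \<delta> x i))) \<ge> L) \<longrightarrow>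
          (\<forall>y. feldman (dill f \<delta> x) (dill f \<delta> y)
               \<le> ereal ((2 * real \<delta> - 1) * real (rule_max f \<delta>) / L) * feldman x y))
    \<and> (\<forall>(\<tau> :: 'a \<Rightarrow> 'a list) (L::real) (x :: nat \<Rightarrow> 'a).
          (\<forall>a. \<tau> a \<noteq> []) \<and> L > 0 \<and> (\<forall>i. real (length (\<tau> (x i))) \<ge> L) \<longrightarrow>
          (\<forall>y. feldman (subst_inf \<tau> x) (subst_inf \<tau> y)
               \<le> ereal (real (subst_max \<tau>) / L) * feldman x y))
    \<and> lipschitz_feldman ((2 * real \<delta> - 1) * real (rule_max f \<delta>) / real (rule_min f \<delta>)) (dill f \<delta>)
    \<and> (\<forall>\<tau> :: 'a \<Rightarrow> 'a list. (\<forall>a. \<tau> a \<noteq> []) \<longrightarrow>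
          lipschitz_feldman (real (subst_max \<tau>) / real (subst_min \<tau>)) (subst_inf \<tau>))"
proof (intro conjI)
  show "\<forall>M M' :: nat.
       (\<forall>u :: 'a list. \<forall>j < length u.
          lev (fstar f \<delta> (del_at j u)) (fstar f \<delta> u)
            \<le> real M + (real (length (fstar f \<delta> u)) - real (length (fstar f \<delta> (del_at j u)))) / 2
        \<and> lev (fstar f \<delta> (del_at j u)) (fstar f \<delta> u)
            \<le> real M' - (real (length (fstar f \<delta> u)) - real (length (fstar f \<delta> (del_at j u)))) / 2)
       \<longrightarrow> lipschitz_feldman ((real M + real M') / real (rule_min f \<delta>)) (dill f \<delta>)"
  proof (intro allI impI)
    fix M M' :: nat
    assume h: "\<forall>u :: 'a list. \<forall>j < length u.
          lev (fstar f \<delta> (del_at j u)) (fstar f \<delta> u)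
            \<le> real M + (real (length (fstar f \<delta> u)) - real (length (fstar f \<delta> (del_at j u)))) / 2
        \<and> lev (fstar f \<delta> (del_at j u)) (fstar f \<delta> u)
            \<le> real M' - (real (length (fstar f \<delta> u)) - real (length (fstar f \<delta> (del_at j u)))) / 2"
    show "lipschitz_feldman ((real M + real M') / real (rule_min f \<delta>)) (dill f \<delta>)"
      by (rule part1[OF delta nonerasing h])
  qed
next
  show "\<forall>(L::real) (x :: nat \<Rightarrow> 'a). L > 0 \<and> (\<forall>i. real (length (f (window \<delta> x i))) \<ge> L) \<longrightarrow>
          (\<forall>y. feldman (dill f \<delta> x) (dill f \<delta> y)
               \<le> ereal ((2 * real \<delta> - 1) * real (rule_max f \<delta>) / L) * feldman x y)"
  proof (intro allI impI)
    fix L :: real and x y :: "nat \<Rightarrow> 'a"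
    assume a: "L > 0 \<and> (\<forall>i. real (length (f (window \<delta> x i))) \<ge> L)"
    show "feldman (dill f \<delta> x) (dill f \<delta> y) \<le> ereal ((2 * real \<delta> - 1) * real (rule_max f \<delta>) / L) * feldman x y"
      using a by (intro part2[where f=f and \<delta>=\<delta> and x=x and y=y and L=L, OF delta nonerasing]) auto
  qed
next
  show "\<forall>(\<tau> :: 'a \<Rightarrow> 'a list) (L::real) (x :: nat \<Rightarrow> 'a).
          (\<forall>a. \<tau> a \<noteq> []) \<and> L > 0 \<and> (\<forall>i. real (length (\<tau> (x i))) \<ge> L) \<longrightarrow>
          (\<forall>y. feldman (subst_inf \<tau> x) (subst_inf \<tau> y)
               \<le> ereal (real (subst_max \<tau>) / L) * feldman x y)"
  proof (intro allI impI)
    fix \<tau> :: "'a \<Rightarrow> 'a list" and L :: real and x y :: "nat \<Rightarrow> 'a"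
    assume a: "(\<forall>a. \<tau> a \<noteq> []) \<and> L > 0 \<and> (\<forall>i. real (length (\<tau> (x i))) \<ge> L)"
    have ne: "\<And>u. length u = 1 \<Longrightarrow> sub_rule \<tau> u \<noteq> []" using a sub_ne by blast
    have Lx: "\<And>i. real (length (sub_rule \<tau> (window 1 x i))) \<ge> L"
      using a by (simp add: window1 window1' sub_rule_def)
    have "feldman (dill (sub_rule \<tau>) 1 x) (dill (sub_rule \<tau>) 1 y)
        \<le> ereal ((2 * real (1::nat) - 1) * real (rule_max (sub_rule \<tau>) 1) / L) * feldman x y"
      using a by (intro part2[where f="sub_rule \<tau>" and \<delta>=1 and x=x and y=y and L=L, OF _ ne _ Lx]) auto
    then show "feldman (subst_inf \<tau> x) (subst_inf \<tau> y) \<le> ereal (real (subst_max \<tau>) / L) * feldman x y"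
      by (simp add: subst_dill sub_max sub_max')
  qed
next
  show "lipschitz_feldman ((2 * real \<delta> - 1) * real (rule_max f \<delta>) / real (rule_min f \<delta>)) (dill f \<delta>)"
    by (rule part3[OF delta nonerasing])
next
  show "\<forall>\<tau> :: 'a \<Rightarrow> 'a list. (\<forall>a. \<tau> a \<noteq> []) \<longrightarrow>
          lipschitz_feldman (real (subst_max \<tau>) / real (subst_min \<tau>)) (subst_inf \<tau>)"
  proof (intro allI impI)
    fix \<tau> :: "'a \<Rightarrow> 'a list"
    assume a: "\<forall>a. \<tau> a \<noteq> []"
    have ne: "\<And>u. length u = 1 \<Longrightarrow> sub_rule \<tau> u \<noteq> []" using a sub_ne by blast
    have "lipschitz_feldman ((2 * real (1::nat) - 1) * real (rule_max (sub_rule \<tau>) 1) / real (rule_min (sub_rule \<tau>) 1))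
           (dill (sub_rule \<tau>) 1)"
      by (rule part3[where f="sub_rule \<tau>" and \<delta>=1, OF _ ne]) simp
    moreover have "subst_inf \<tau> = dill (sub_rule \<tau>) 1" using subst_dill by blast
    ultimately show "lipschitz_feldman (real (subst_max \<tau>) / real (subst_min \<tau>)) (subst_inf \<tau>)"
      by (simp add: sub_max sub_min sub_max' sub_min')
  qed
qed


end
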